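(* For all $a,b\in\mathbb{B}^n$, \[ \mathrm{th}\left(\frac{\rho_{\mathbb{B}^n}(a,b)}{4}\right)\ge\mathrm{th}\left(\frac{h_{\mathbb{B}^n}(a,b)}{4}\right)\ge\frac{|a-b|}{\sqrt{4-|a+b|^2}}, \] with equality if $a=-b$.
   Context: $\mathbb{B}^n$ is the unit ball of $\mathbb{R}^n$. Hyperbolic metric: $\mathrm{sh}\frac{\rho_{\mathbb{B}^n}(a,b)}{2}=\frac{|a-b|}{\sqrt{(1-|a|^2)(1-|b|^2)}}$. Hilbert metric: for distinct $a,b$ in a bounded convex domain $G\subset\mathbb{R}^n$, let $u,v$ be the intersection points of the line through $a,b$ with $\partial G$, ordered $u,a,b,v$; $h_G(a,b)=\log\frac{|u-b||a-v|}{|u-a||b-v|}$, and $h_G(a,a)=0$. *)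

theory Defs
  imports "HOL-Analysis.Analysis"
begin

definition hyp_ball_dist :: "'a::euclidean_space \<Rightarrow> 'a \<Rightarrow> real" where
  "hyp_ball_dist a b =
     2 * arsinh (norm (a - b) / sqrt ((1 - (norm a)\<^sup>2) * (1 - (norm b)\<^sup>2)))"

text \<open>For distinct a, b the line through
  a, b meets the boundary in u, v with order u, a, b, v: u lies on the ray from b
  through a beyond a, and v lies on the ray from a through b beyond b.\<close>
definition hilbert_dist :: "'a::euclidean_space set \<Rightarrow> 'a \<Rightarrow> 'a \<Rightarrow> real" where
  "hilbert_dist G a b =
     (if a = b then 0 else
      (let u = (THE u. u \<in> frontier G \<and> (\<exists>t::real. t \<ge> 1 \<and> u = b + t *\<^sub>R (a - b)));
           v = (THE v. v \<in> frontier G \<and> (\<exists>t::real. t \<ge> 1 \<and> v = a + t *\<^sub>R (b - a)))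
       in ln ((norm (u - b) * norm (a - v)) / (norm (u - a) * norm (b - v)))))"

end

theory Submission
  imports Defs
begin

lemma real_part:
  fixes L al r :: real
  assumes L: "L > 0" and r1: "r \<le> 1" and ha: "\<bar>al\<bar> < r" and hb: "\<bar>al + L\<bar> < r"
  defines "be \<equiv> al + L"
  defines "Q \<equiv> (r\<^sup>2 - al\<^sup>2) * (r\<^sup>2 - be\<^sup>2)"
  defines "X \<equiv> ((r + be) * (r - al)) / ((r + al) * (r - be))"
  shows "tanh (2 * arsinh (L / sqrt Q) / 4) \<ge> tanh (ln X / 4)
      \<and> tanh (ln X / 4) \<ge> L / sqrt (4 * r\<^sup>2 - (al + be)\<^sup>2)
      \<and> (r = 1 \<and> al + be = 0 \<longrightarrow> tanh (2 * arsinh (L / sqrt Q) / 4) = tanh (ln X / 4)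
            \<and> tanh (ln X / 4) = L / sqrt (4 * r\<^sup>2 - (al + be)\<^sup>2))"
proof -
  have hb': "\<bar>be\<bar> < r" using hb by (simp add: be_def)
  have r0: "r > 0" using ha by linarith
  have a1: "r - al > 0" "r + al > 0" using ha by auto
  have b1: "r - be > 0" "r + be > 0" using hb' by auto
  have Qeq: "Q = (r + al) * (r - al) * ((r + be) * (r - be))"
    unfolding Q_def by (simp add: power2_eq_square algebra_simps)
  have Q0: "Q > 0" unfolding Qeq using a1 b1 by simp
  define M where "M = r\<^sup>2 - al * be"
  define P where "P = M + r * L"
  have Peq: "P = (r + be) * (r - al)" unfolding P_def M_def be_def by (simp add: algebra_simps power2_eq_square)
  have P0: "P > 0" unfolding Peq using a1 b1 by simp
  have MQ: "M\<^sup>2 = r\<^sup>2 * L\<^sup>2 + Q" unfolding M_def Q_def be_def by (simp add: algebra_simps power2_eq_square)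
  have M0: "M > 0"
  proof -
    have "\<bar>al * be\<bar> < r * r" unfolding abs_mult using ha hb'
      by (simp add: mult_strict_mono')
    then show ?thesis unfolding M_def by (simp add: power2_eq_square)
  qed
  have XP: "X = P\<^sup>2 / Q"
  proof -
    have "P\<^sup>2 / Q = ((r + be) * (r - al)) * ((r + be) * (r - al)) / (((r + al) * (r - be)) * ((r + be) * (r - al)))"
      unfolding Qeq Peq power2_eq_square by (simp add: algebra_simps)
    also have "\<dots> = X"
    proof -
      have nz: "(r + be) * (r - al) \<noteq> 0" using a1 b1 by simp
      show ?thesis unfolding X_def by (rule mult_divide_mult_cancel_right[OF nz])
    qed
    finally show ?thesis by simp
  qed
  define Y where "Y = P / sqrt Q"
  have sQ: "sqrt Q > 0" using Q0 by simp
  have Y0: "Y > 0" unfolding Y_def using P0 sQ by simp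
  have XY: "X = Y\<^sup>2" unfolding XP Y_def using Q0 by (simp add: power_divide)
  define Z where "Z = sqrt Y"
  have Z0: "Z > 0" unfolding Z_def using Y0 by simp
  have YZ: "Y = Z\<^sup>2" unfolding Z_def using Y0 by simp
  have lnX: "ln X = 4 * ln Z" unfolding XY YZ using Z0 by (simp add: ln_realpow)
  have th: "tanh (ln X / 4) = (Y - 1) / (Y + 1)" unfolding lnX using tanh_ln_real[OF Z0] YZ by simp
  have th2: "(Y - 1) / (Y + 1) = r * L / (M + sqrt Q)"
  proof -
    have sq: "sqrt Q ^ 2 = Q" using Q0 by simp
    have e1: "Y - 1 = (P - sqrt Q) / sqrt Q" unfolding Y_def using sQ by (simp add: field_simps)
    have e2: "Y + 1 = (P + sqrt Q) / sqrt Q" unfolding Y_def using sQ by (simp add: field_simps)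
    have "(Y - 1) / (Y + 1) = (P - sqrt Q) / (P + sqrt Q)" unfolding e1 e2 using sQ
      by simp
    also have "\<dots> = r * L / (M + sqrt Q)"
    proof -
      have eq: "(P - sqrt Q) * (M + sqrt Q) = r * L * (P + sqrt Q)"
        using MQ sq unfolding P_def by (simp add: algebra_simps power2_eq_square)
      have nz: "P + sqrt Q \<noteq> 0" "M + sqrt Q \<noteq> 0" using sQ P0 M0 by linarith+
      show ?thesis using eq by (subst frac_eq_eq[OF nz]) simp
    qed
    finally show ?thesis .
  qed
  define D where "D = 4 * r\<^sup>2 - (al + be)\<^sup>2"
  have asq: "r\<^sup>2 - al\<^sup>2 > 0"
  proof -
    have "(r - al) * (r + al) > 0" using a1 by simp
    then show ?thesis by (simp add: algebra_simps power2_eq_square)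
  qed
  have bsq: "r\<^sup>2 - be\<^sup>2 > 0"
  proof -
    have "(r - be) * (r + be) > 0" using b1 by simp
    then show ?thesis by (simp add: algebra_simps power2_eq_square)
  qed
  have sQle: "sqrt Q \<le> r\<^sup>2 - (al\<^sup>2 + be\<^sup>2) / 2"
  proof -
    have "sqrt Q \<le> ((r\<^sup>2 - al\<^sup>2) + (r\<^sup>2 - be\<^sup>2)) / 2"
      unfolding Q_def using asq bsq
      by (intro arith_geo_mean_sqrt) auto
    then show ?thesis by (simp add: field_simps)
  qed
  have MsQ: "M + sqrt Q \<le> D / 2" 
  proof -
    have "D / 2 = r\<^sup>2 - al * be + (r\<^sup>2 - (al\<^sup>2 + be\<^sup>2) / 2)" unfolding D_def by (simp add: power2_eq_square field_simps)
    then show ?thesis using sQle unfolding M_def by linarith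
  qed
  have D0: "D > 0" using MsQ M0 sQ by linarith
  have sD: "sqrt D \<le> 2 * r"
  proof -
    have "D \<le> (2 * r)\<^sup>2" unfolding D_def by (simp add: power2_eq_square)
    then have "sqrt D \<le> sqrt ((2 * r)\<^sup>2)" by (rule real_sqrt_le_mono)
    moreover have "sqrt ((2 * r)\<^sup>2) = 2 * r" using r0 by (intro real_sqrt_unique) auto
    ultimately show ?thesis by linarith
  qed
  define S where "S = L / sqrt Q"
  have sq: "sqrt Q ^ 2 = Q" using Q0 by simp
  have S1: "S\<^sup>2 + 1 = (M / sqrt Q)\<^sup>2 + (1 - r\<^sup>2) * L\<^sup>2 / Q"
    unfolding S_def power_divide sq MQ using Q0 by (simp add: field_simps)
  have extra: "(1 - r\<^sup>2) * L\<^sup>2 / Q \<ge> 0"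
  proof -
    have "r\<^sup>2 \<le> 1" using r0 r1 by (simp add: power_le_one)
    then show ?thesis using Q0 by simp
  qed
  have sS: "sqrt (S\<^sup>2 + 1) \<ge> M / sqrt Q"
  proof -
    have "sqrt ((M / sqrt Q)\<^sup>2) \<le> sqrt (S\<^sup>2 + 1)" using S1 extra by (intro real_sqrt_le_mono) linarith
    moreover have "sqrt ((M / sqrt Q)\<^sup>2) = M / sqrt Q" using M0 sQ by (intro real_sqrt_unique) auto
    ultimately show ?thesis by simp
  qed
  have SrL: "S \<ge> r * L / sqrt Q" unfolding S_def using sQ L r1 by (simp add: divide_right_mono)
  have YS: "Y \<le> S + sqrt (S\<^sup>2 + 1)"
  proof -
    have "Y = r * L / sqrt Q + M / sqrt Q" unfolding Y_def P_def by (simp add: add_divide_distrib)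
    then show ?thesis using sS SrL by linarith
  qed
  have lnX2: "ln X = 2 * ln Y" unfolding XY using Y0 by (simp add: ln_realpow)
  have ar: "arsinh S = ln (S + sqrt (S\<^sup>2 + 1))" by (rule arsinh_real_def)
  have first: "ln X \<le> 2 * arsinh (L / sqrt Q)"
    unfolding lnX2 S_def[symmetric] ar using YS Y0 by simp
  have tl: "tanh (ln X / 4) = r * L / (M + sqrt Q)" using th th2 by simp
  have MsQ0: "M + sqrt Q > 0" using M0 sQ by linarith
  have sD0: "sqrt D > 0" using D0 by simp
  have keyD: "M + sqrt Q \<le> r * sqrt D"
  proof -
    have "sqrt D * sqrt D \<le> (2 * r) * sqrt D" using sD0 by (intro mult_right_mono[OF sD]) simp
    moreover have "sqrt D * sqrt D = D" using D0 by simp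
    ultimately show ?thesis using MsQ by linarith
  qed
  have second: "L / sqrt D \<le> r * L / (M + sqrt Q)"
  proof -
    have "L * (M + sqrt Q) \<le> L * (r * sqrt D)" using keyD L by (intro mult_left_mono) auto
    then show ?thesis using MsQ0 sD0 L by (simp add: field_simps)
  qed
  have eqcase: "2 * arsinh (L / sqrt Q) = ln X \<and> r * L / (M + sqrt Q) = L / sqrt D"
    if h: "r = 1" "al + be = 0"
  proof
    have Y_eq: "Y = S + sqrt (S\<^sup>2 + 1)"
    proof -
      have "sqrt (S\<^sup>2 + 1) = M / sqrt Q" using S1 h M0 sQ by (simp add: real_sqrt_unique)
      moreover have "Y = r * L / sqrt Q + M / sqrt Q" unfolding Y_def P_def by (simp add: add_divide_distrib)
      ultimately show ?thesis using h unfolding S_def by simp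
    qed
    show "2 * arsinh (L / sqrt Q) = ln X"
      unfolding lnX2 S_def[symmetric] ar Y_eq by simp
    have beal: "be = - al" using h by simp
    have Qv: "Q = (1 - al\<^sup>2)\<^sup>2" unfolding Q_def beal h by (simp add: power2_eq_square)
    have "sqrt Q = 1 - al\<^sup>2" unfolding Qv using asq h by simp
    moreover have "D = 4" unfolding D_def h by simp
    ultimately have "M + sqrt Q = 2" "sqrt D = 2" unfolding M_def beal h by (simp_all add: power2_eq_square)
    then show "r * L / (M + sqrt Q) = L / sqrt D" using h by simp
  qed
  have f2: "tanh (ln X / 4) \<le> tanh (2 * arsinh (L / sqrt Q) / 4)"
    using first by (subst tanh_real_le_iff) linarith
  show ?thesis
  proof (intro conjI impI)
    show "tanh (ln X / 4) \<le> tanh (2 * arsinh (L / sqrt Q) / 4)" by (rule f2)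
    show "L / sqrt (4 * r\<^sup>2 - (al + be)\<^sup>2) \<le> tanh (ln X / 4)" using second tl unfolding D_def by simp
    assume h: "r = 1 \<and> al + be = 0"
    then show "tanh (2 * arsinh (L / sqrt Q) / 4) = tanh (ln X / 4)" using eqcase by simp
    show "tanh (ln X / 4) = L / sqrt (4 * r\<^sup>2 - (al + be)\<^sup>2)" using eqcase h tl unfolding D_def by simp
  qed
qed

lemma norm_line_sq:
  fixes a d :: "'a::euclidean_space"
  shows "(norm (a + s *\<^sub>R d))\<^sup>2 = (norm a)\<^sup>2 + 2 * s * inner a d + s\<^sup>2 * (norm d)\<^sup>2"
  unfolding power2_norm_eq_inner by (simp add: inner_add_left inner_add_right inner_commute algebra_simps power2_eq_square)

lemma geom_part:
  fixes a b :: "'a::euclidean_space"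
  assumes a: "norm a < 1" and b: "norm b < 1" and ab: "a \<noteq> b"
  defines "d \<equiv> b - a"
  defines "L \<equiv> norm d"
  defines "al \<equiv> inner a d / L"
  defines "r \<equiv> sqrt (1 - (norm a)\<^sup>2 + al\<^sup>2)"
  shows "L > 0 \<and> r \<le> 1 \<and> \<bar>al\<bar> < r \<and> \<bar>al + L\<bar> < r
     \<and> hyp_ball_dist a b = 2 * arsinh (L / sqrt ((r\<^sup>2 - al\<^sup>2) * (r\<^sup>2 - (al + L)\<^sup>2)))
     \<and> hilbert_dist (ball 0 1) a b = ln (((r + (al + L)) * (r - al)) / ((r + al) * (r - (al + L))))
     \<and> 4 - (norm (a + b))\<^sup>2 = 4 * r\<^sup>2 - (al + (al + L))\<^sup>2
     \<and> norm (a - b) = L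
     \<and> (a = - b \<longrightarrow> r = 1 \<and> al + (al + L) = 0)"
proof -
  have L0: "L > 0" unfolding L_def d_def using ab by simp
  have adL: "inner a d = al * L" unfolding al_def using L0 by simp
  have dL: "(norm d)\<^sup>2 = L\<^sup>2" unfolding L_def by simp
  have cs: "al\<^sup>2 \<le> (norm a)\<^sup>2"
  proof -
    have "\<bar>inner a d\<bar> \<le> norm a * L" unfolding L_def by (rule Cauchy_Schwarz_ineq2)
    then have "\<bar>al\<bar> * L \<le> norm a * L" using adL L0 by (simp add: abs_mult)
    then have "\<bar>al\<bar> \<le> norm a" using L0 by simp
    then have "\<bar>al\<bar>\<^sup>2 \<le> (norm a)\<^sup>2" by (intro power_mono) auto
    then show ?thesis by simp
  qed
  have na1: "(norm a)\<^sup>2 < 1" using a by (simp add: power_less_one_iff abs_square_less_1)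
  have nb1: "(norm b)\<^sup>2 < 1" using b by (simp add: abs_square_less_1)
  have rr: "r\<^sup>2 = 1 - (norm a)\<^sup>2 + al\<^sup>2" unfolding r_def using cs na1 by simp
  have r0: "r > 0"
  proof -
    have "1 - (norm a)\<^sup>2 + al\<^sup>2 > 0" using na1 zero_le_power2[of al] by linarith
    then show ?thesis unfolding r_def by simp
  qed
  have bad: "b = a + 1 *\<^sub>R d" unfolding d_def by simp
  have nb: "(norm b)\<^sup>2 = (norm a)\<^sup>2 + 2 * al * L + L\<^sup>2"
    by (subst bad, subst norm_line_sq) (simp add: adL dL)
  have r1: "r \<le> 1"
  proof -
    have "r\<^sup>2 \<le> 1\<^sup>2" using rr cs by simp
    then show ?thesis using r0 by (simp add: power_le_one_iff abs_le_square_iff)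
  qed
  have ra: "r\<^sup>2 - al\<^sup>2 = 1 - (norm a)\<^sup>2" using rr by simp
  have rb: "r\<^sup>2 - (al + L)\<^sup>2 = 1 - (norm b)\<^sup>2" using rr nb by (simp add: power2_eq_square algebra_simps)
  have hal: "\<bar>al\<bar> < r"
  proof -
    have "al\<^sup>2 < r\<^sup>2" using ra na1 by simp
    then show ?thesis using r0 power2_less_imp_less[of "\<bar>al\<bar>" r] by simp
  qed
  have hbe: "\<bar>al + L\<bar> < r"
  proof -
    have "(al + L)\<^sup>2 < r\<^sup>2" using rb nb1 by simp
    then show ?thesis using r0 power2_less_imp_less[of "\<bar>al + L\<bar>" r] by simp
  qed
  have nab: "norm (a - b) = L" unfolding L_def d_def by (simp add: norm_minus_commute)
  have hyp: "hyp_ball_dist a b = 2 * arsinh (L / sqrt ((r\<^sup>2 - al\<^sup>2) * (r\<^sup>2 - (al + L)\<^sup>2)))"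
    unfolding hyp_ball_dist_def ra rb nab ..
  have line: "(norm (a + s *\<^sub>R d))\<^sup>2 = 1 - r\<^sup>2 + (s * L + al)\<^sup>2" for s
    unfolding norm_line_sq adL dL rr by (simp add: power2_eq_square algebra_simps)
  have sq_cases: "x = r \<or> x = - r" if "x\<^sup>2 = r\<^sup>2" for x
    using that r0 by (metis power2_eq_iff)
  have on_sphere: "norm (a + s *\<^sub>R d) = 1" if "(s * L + al)\<^sup>2 = r\<^sup>2" for s
  proof -
    have "(norm (a + s *\<^sub>R d))\<^sup>2 = 1\<^sup>2" using line[of s] that by simp
    then show ?thesis using power2_eq_iff_nonneg[of "norm (a + s *\<^sub>R d)" 1] by simp
  qed
  have sphere_sol: "(s * L + al)\<^sup>2 = r\<^sup>2" if "norm (a + s *\<^sub>R d) = 1" for s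
    using line[of s] that by simp
  define su where "su = (- r - al) / L"
  define sv where "sv = (r - al) / L"
  have suL: "su * L + al = - r" unfolding su_def using L0 by simp
  have svL: "sv * L + al = r" unfolding sv_def using L0 by simp
  have fr: "frontier (ball (0::'a) 1) = sphere 0 1" by simp
  have u_eq: "(THE u. u \<in> frontier (ball 0 1) \<and> (\<exists>t::real. t \<ge> 1 \<and> u = b + t *\<^sub>R (a - b))) = a + su *\<^sub>R d"
  proof (rule the_equality)
    show "a + su *\<^sub>R d \<in> frontier (ball 0 1) \<and> (\<exists>t::real. t \<ge> 1 \<and> a + su *\<^sub>R d = b + t *\<^sub>R (a - b))"
    proof
      show "a + su *\<^sub>R d \<in> frontier (ball 0 1)" unfolding fr using on_sphere[of su] suL by simp
      have "su \<le> 0" unfolding su_def using L0 hal by (simp add: divide_nonpos_pos)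
      moreover have "a + su *\<^sub>R d = b + (1 - su) *\<^sub>R (a - b)" unfolding d_def by (simp add: algebra_simps)
      ultimately show "\<exists>t::real. t \<ge> 1 \<and> a + su *\<^sub>R d = b + t *\<^sub>R (a - b)" by (intro exI[of _ "1 - su"]) simp
    qed
  next
    fix u assume h: "u \<in> frontier (ball 0 1) \<and> (\<exists>t::real. t \<ge> 1 \<and> u = b + t *\<^sub>R (a - b))"
    then obtain t :: real where t1: "t \<ge> 1" and ut: "u = b + t *\<^sub>R (a - b)" by blast
    have ut': "u = a + (1 - t) *\<^sub>R d" unfolding ut d_def by (simp add: algebra_simps)
    have "norm u = 1" using h fr by simp
    then have "((1 - t) * L + al)\<^sup>2 = r\<^sup>2" using sphere_sol ut' by simp
    moreover have "(1 - t) * L + al < r"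
    proof -
      have "(1 - t) * L \<le> 0" using t1 L0 by (simp add: mult_nonpos_nonneg)
      then show ?thesis using hal by linarith
    qed
    ultimately have "(1 - t) * L + al = - r" using sq_cases by fastforce
    then have "1 - t = su" unfolding su_def using L0 by (simp add: field_simps)
    then show "u = a + su *\<^sub>R d" using ut' by simp
  qed
  have v_eq: "(THE v. v \<in> frontier (ball 0 1) \<and> (\<exists>t::real. t \<ge> 1 \<and> v = a + t *\<^sub>R (b - a))) = a + sv *\<^sub>R d"
  proof (rule the_equality)
    show "a + sv *\<^sub>R d \<in> frontier (ball 0 1) \<and> (\<exists>t::real. t \<ge> 1 \<and> a + sv *\<^sub>R d = a + t *\<^sub>R (b - a))"
    proof
      show "a + sv *\<^sub>R d \<in> frontier (ball 0 1)" unfolding fr using on_sphere[of sv] svL by simp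
      have "sv \<ge> 1" unfolding sv_def using L0 hbe by (simp add: field_simps)
      then show "\<exists>t::real. t \<ge> 1 \<and> a + sv *\<^sub>R d = a + t *\<^sub>R (b - a)" unfolding d_def by blast
    qed
  next
    fix v assume h: "v \<in> frontier (ball 0 1) \<and> (\<exists>t::real. t \<ge> 1 \<and> v = a + t *\<^sub>R (b - a))"
    then obtain t :: real where t1: "t \<ge> 1" and vt: "v = a + t *\<^sub>R d" unfolding d_def by blast
    have "norm v = 1" using h fr by simp
    then have "(t * L + al)\<^sup>2 = r\<^sup>2" using sphere_sol vt by simp
    moreover have "t * L + al > - r"
    proof -
      have "t * L \<ge> L" using t1 L0 by simp
      then show ?thesis using hbe by linarith
    qed
    ultimately have "t * L + al = r" using sq_cases by fastforce
    then have "t = sv" unfolding sv_def using L0 by (simp add: field_simps)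
    then show "v = a + sv *\<^sub>R d" using vt by simp
  qed
  have n1: "norm (a + su *\<^sub>R d - b) = r + (al + L)"
  proof -
    have "a + su *\<^sub>R d - b = (su - 1) *\<^sub>R d" unfolding d_def by (simp add: algebra_simps)
    moreover have "\<bar>su - 1\<bar> * L = r + (al + L)"
    proof -
      have "su - 1 = - (r + (al + L)) / L" unfolding su_def using L0 by (simp add: field_simps)
      moreover have "r + (al + L) > 0" using hbe by linarith
      ultimately show ?thesis using L0 by simp
    qed
    ultimately show ?thesis unfolding L_def by simp
  qed
  have n2: "norm (a - (a + sv *\<^sub>R d)) = r - al"
  proof -
    have "\<bar>sv\<bar> * L = r - al" unfolding sv_def using L0 hal by simp
    then show ?thesis unfolding L_def by simp
  qed
  have n3: "norm (a + su *\<^sub>R d - a) = r + al"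
  proof -
    have "\<bar>su\<bar> * L = r + al" unfolding su_def using L0 hal by (simp add: abs_div_pos)
    then show ?thesis unfolding L_def by simp
  qed
  have n4: "norm (b - (a + sv *\<^sub>R d)) = r - (al + L)"
  proof -
    have "b - (a + sv *\<^sub>R d) = (1 - sv) *\<^sub>R d" unfolding d_def by (simp add: algebra_simps)
    moreover have "\<bar>1 - sv\<bar> * L = r - (al + L)"
    proof -
      have "1 - sv = - (r - (al + L)) / L" unfolding sv_def using L0 by (simp add: field_simps)
      moreover have "r - (al + L) > 0" using hbe by linarith
      ultimately show ?thesis using L0 by simp
    qed
    ultimately show ?thesis unfolding L_def by simp
  qed
  have hil: "hilbert_dist (ball 0 1) a b = ln (((r + (al + L)) * (r - al)) / ((r + al) * (r - (al + L))))"
    unfolding hilbert_dist_def Let_def u_eq v_eq using ab n1 n2 n3 n4 by simp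
  have ab2: "4 - (norm (a + b))\<^sup>2 = 4 * r\<^sup>2 - (al + (al + L))\<^sup>2"
  proof -
    have "(norm (a + b))\<^sup>2 = (norm ((2::real) *\<^sub>R a + d))\<^sup>2" unfolding d_def by (simp add: algebra_simps scaleR_2)
    also have "\<dots> = 4 * (norm a)\<^sup>2 + 4 * inner a d + (norm d)\<^sup>2"
      unfolding power2_norm_eq_inner by (simp add: inner_add_left inner_add_right inner_commute algebra_simps)
    finally show ?thesis using rr adL dL by (simp add: power2_eq_square algebra_simps)
  qed
  have anti: "r = 1 \<and> al + (al + L) = 0" if h: "a = - b"
  proof -
    have dd: "d = - 2 *\<^sub>R a" unfolding d_def using h by (simp add: scaleR_2)
    have Lv: "L = 2 * norm a" unfolding L_def dd by simp
    have "inner a d = - 2 * (norm a)\<^sup>2" unfolding dd by (simp add: power2_norm_eq_inner)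
    then have "al * L = (- norm a) * L" using adL Lv by (simp add: power2_eq_square)
    then have alv: "al = - norm a" using L0 by (metis mult_right_cancel less_irrefl)
    have "r\<^sup>2 = 1" using rr alv by simp
    then have "r = 1" using r0 by (simp add: power2_eq_1_iff)
    then show ?thesis using alv Lv by simp
  qed
  show ?thesis using L0 r1 hal hbe hyp hil ab2 nab anti by blast
qed

theorem corollary3p10:
  fixes a b :: "'a::euclidean_space"
  assumes "a \<in> ball 0 1" and "b \<in> ball 0 1"
  shows "tanh (hyp_ball_dist a b / 4) \<ge> tanh (hilbert_dist (ball 0 1) a b / 4)
       \<and> tanh (hilbert_dist (ball 0 1) a b / 4) \<ge> norm (a - b) / sqrt (4 - (norm (a + b))\<^sup>2)
       \<and> (a = - b \<longrightarrow>
            tanh (hyp_ball_dist a b / 4) = tanh (hilbert_dist (ball 0 1) a b / 4)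
          \<and> tanh (hilbert_dist (ball 0 1) a b / 4) = norm (a - b) / sqrt (4 - (norm (a + b))\<^sup>2))"
proof (cases "a = b")
  case True
  then show ?thesis unfolding hyp_ball_dist_def hilbert_dist_def by simp
next
  case False
  have a: "norm a < 1" and b: "norm b < 1" using assms by auto
  define d where "d = b - a"
  define L where "L = norm d"
  define al where "al = inner a d / L"
  define r where "r = sqrt (1 - (norm a)\<^sup>2 + al\<^sup>2)"
  note g = geom_part[OF a b False, folded d_def, folded L_def, folded al_def, folded r_def]
  have rp: "tanh (2 * arsinh (L / sqrt ((r\<^sup>2 - al\<^sup>2) * (r\<^sup>2 - (al + L)\<^sup>2))) / 4) \<ge> tanh (ln (((r + (al + L)) * (r - al)) / ((r + al) * (r - (al + L)))) / 4)
      \<and> tanh (ln (((r + (al + L)) * (r - al)) / ((r + al) * (r - (al + L)))) / 4) \<ge> L / sqrt (4 * r\<^sup>2 - (al + (al + L))\<^sup>2)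
      \<and> (r = 1 \<and> al + (al + L) = 0 \<longrightarrow> tanh (2 * arsinh (L / sqrt ((r\<^sup>2 - al\<^sup>2) * (r\<^sup>2 - (al + L)\<^sup>2))) / 4) = tanh (ln (((r + (al + L)) * (r - al)) / ((r + al) * (r - (al + L)))) / 4)
            \<and> tanh (ln (((r + (al + L)) * (r - al)) / ((r + al) * (r - (al + L)))) / 4) = L / sqrt (4 * r\<^sup>2 - (al + (al + L))\<^sup>2))"
    using real_part[of L r al] g by blast
  show ?thesis using rp g by metis
qed

end
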